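(* For each $n$, let $W\in\mathbb{R}^{n\times n}$ be a random symmetric matrix with zero diagonal whose entries $W_{ij}$, $i<j$, are independent Rademacher random variables (uniform on $\{-1,+1\}$). For $S\subseteq[n]=\{1,\dots,n\}$ let $W_S$ denote the principal submatrix of $W$ with index set $S$. Then for every $\beta>0$ (independent of $n$) there exists $\alpha>0$ (independent of $n$) such that $$\max_{\substack{S\subseteq[n]\\|S|\leq \alpha n}}\|W_S\|_{2\to2}\leq \beta\sqrt{n}$$ with probability at least $1-4e^{-\alpha\log(1/\alpha)n}$.
   Context: $\|M\|_{2\to2}$ denotes the operator norm (largest singular value) of a matrix $M$ with respect to the Euclidean norm. *)

theory Defs
  imports "HOL-Probability.Probability"
begin

text \<open>Index set [n] is rendered as {..<n} = {0,...,n-1}. A matrix is a function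
  nat => nat => real; only entries with indices < n matter.\<close>

text \<open>Independent Rademacher signs for the strictly upper triangular entries i<j<n
  (all other entries fixed to 0, so the set is finite).\<close>
definition sign_configs :: "nat \<Rightarrow> (nat \<Rightarrow> nat \<Rightarrow> real) set" where
  "sign_configs n = {f. (\<forall>i j. i < j \<and> j < n \<longrightarrow> f i j \<in> {-1, 1}) \<and>
                        (\<forall>i j. \<not> (i < j \<and> j < n) \<longrightarrow> f i j = 0)}"

definition sym_of :: "(nat \<Rightarrow> nat \<Rightarrow> real) \<Rightarrow> nat \<Rightarrow> nat \<Rightarrow> real" where
  "sym_of f i j = (if i < j then f i j else if j < i then f j i else 0)"

definition rademacher_sym_pmf :: "nat \<Rightarrow> (nat \<Rightarrow> nat \<Rightarrow> real) pmf" where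
  "rademacher_sym_pmf n = map_pmf sym_of (pmf_of_set (sign_configs n))"

definition op_norm_sub :: "(nat \<Rightarrow> nat \<Rightarrow> real) \<Rightarrow> nat set \<Rightarrow> real" where
  "op_norm_sub W S = Sup {sqrt (\<Sum>i\<in>S. (\<Sum>j\<in>S. W i j * x j)^2) | x. (\<Sum>j\<in>S. (x j)^2) \<le> 1}"

end

theory Submission
  imports Defs
begin


lemma cosh_bound:
  fixes x :: real
  shows "(exp x + exp (-x)) / 2 \<le> exp (x^2 / 2)"
proof -
  define a where "a = \<bar>x\<bar>"
  have a0: "a \<ge> 0" by (simp add: a_def)
  have sym: "exp x + exp (-x) = exp a + exp (-a)"
    by (cases "x \<ge> 0") (auto simp: a_def)
  define C where "C = (exp a + exp (-a)) / 2"
  define Q where "Q = 1 + (1/2) * (exp (2*a) - 1)"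
  have pos: "C > 0" unfolding C_def by (intro divide_pos_pos add_pos_pos) auto
  have h1: "- (2*a) * (1/2) + ln Q \<le> (2*a)^2 / 8"
    unfolding Q_def by (rule Hoeffdings_lemma_aux) (use a0 in auto)
  have h2: "Q = exp a * C"
  proof -
    have "exp (2*a) = exp a * exp a" by (metis mult_2 exp_add)
    moreover have "exp a * exp (-a) = 1" by (simp add: exp_minus)
    ultimately show ?thesis unfolding Q_def C_def by (simp add: algebra_simps)
  qed
  have h3: "ln (exp a * C) = a + ln C" using pos by (subst ln_mult_pos) auto
  have "ln C \<le> a^2/2" using h1 h2 h3 by (simp add: power2_eq_square)
  hence "C \<le> exp (a^2/2)"
    using pos by (metis exp_le_cancel_iff exp_ln)
  moreover have "a^2 = x^2" by (simp add: a_def)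
  ultimately show ?thesis using sym unfolding C_def by simp
qed

lemma sum_square_split:
  fixes g :: "nat \<Rightarrow> nat \<Rightarrow> real"
  shows "(\<Sum>i<n. \<Sum>j<n. g i j) = (\<Sum>j<n. \<Sum>i<j. g i j + g j i) + (\<Sum>i<n. g i i)"
proof (induction n)
  case 0 then show ?case by simp
next
  case (Suc n)
  have "(\<Sum>i<Suc n. \<Sum>j<Suc n. g i j) = (\<Sum>i<n. \<Sum>j<n. g i j) + (\<Sum>i<n. g i n) + (\<Sum>j<n. g n j) + g n n"
    by (simp add: sum.distrib)
  also have "\<dots> = (\<Sum>j<Suc n. \<Sum>i<j. g i j + g j i) + (\<Sum>i<Suc n. g i i)"
    using Suc by (simp add: sum.distrib)
  finally show ?case .
qed

definition PP :: "nat \<Rightarrow> (nat \<times> nat) set" where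
  "PP n = (SIGMA j:{..<n}. {..<j})"

definition Fm :: "nat \<Rightarrow> (nat \<times> nat \<Rightarrow> real) \<Rightarrow> nat \<Rightarrow> nat \<Rightarrow> real" where
  "Fm n h i j = (if i < j \<and> j < n then h (j, i) else 0)"

lemma finite_PP: "finite (PP n)"
  by (simp add: PP_def)

lemma sc_image: "sign_configs n = Fm n ` PiE (PP n) (\<lambda>_. {-1, 1})"
proof (rule set_eqI, rule iffI)
  fix f assume f: "f \<in> sign_configs n"
  define h where "h = (\<lambda>p. if p \<in> PP n then f (snd p) (fst p) else undefined)"
  have "h \<in> PiE (PP n) (\<lambda>_. {-1, 1})"
  proof (rule PiE_I)
    fix p assume "p \<in> PP n"
    then obtain j i where p: "p = (j, i)" "i < j" "j < n" by (auto simp: PP_def)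
    have "f i j \<in> {-1, 1}" using f p by (simp add: sign_configs_def)
    thus "h p \<in> {-1, 1}" using p \<open>p \<in> PP n\<close> by (simp add: h_def)
  next
    fix p assume "p \<notin> PP n" thus "h p = undefined" by (simp add: h_def)
  qed
  moreover have "f = Fm n h"
    using f by (auto simp: h_def PP_def sign_configs_def Fm_def fun_eq_iff)
  ultimately show "f \<in> Fm n ` PiE (PP n) (\<lambda>_. {-1, 1})" by blast
next
  fix f assume "f \<in> Fm n ` PiE (PP n) (\<lambda>_. {-1, 1})"
  then obtain h where h: "h \<in> PiE (PP n) (\<lambda>_. {-1, 1})" and fh: "f = Fm n h" by blast
  show "f \<in> sign_configs n"
    using h unfolding fh sign_configs_def Fm_def PP_def by (auto simp: PiE_def Pi_def)
qed

lemma inj_Fm: "inj_on (Fm n) (PiE (PP n) (\<lambda>_. {-1, 1}))"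
proof (rule inj_onI)
  fix h h' assume h: "h \<in> PiE (PP n) (\<lambda>_. {-1, 1})" and h': "h' \<in> PiE (PP n) (\<lambda>_. {-1, 1})"
    and eq: "Fm n h = Fm n h'"
  show "h = h'"
  proof (rule PiE_ext[OF h h'])
    fix p assume "p \<in> PP n"
    then obtain j i where p: "p = (j, i)" "i < j" "j < n" by (auto simp: PP_def)
    have "Fm n h i j = Fm n h' i j" using eq by simp
    thus "h p = h' p" using p by (simp add: Fm_def)
  qed
qed

lemma finite_sc: "finite (sign_configs n)"
  by (simp add: sc_image finite_PP finite_PiE)

lemma card_sc: "card (sign_configs n) = 2 ^ card (PP n)"
  by (simp add: sc_image card_image[OF inj_Fm] card_PiE finite_PP numeral_2_eq_2)

lemma sc_nonempty: "sign_configs n \<noteq> {}"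
  using card_sc[of n] by (metis card.empty power_not_zero zero_neq_numeral)

lemma sum_PP: "(\<Sum>p\<in>PP n. g p) = (\<Sum>j<n. \<Sum>i<j. g (j, i))"
  by (simp add: PP_def sum.Sigma)

lemma mgf_bound:
  fixes c :: "nat \<Rightarrow> nat \<Rightarrow> real" and l :: real
  shows "(\<Sum>f\<in>sign_configs n. exp (l * (\<Sum>j<n. \<Sum>i<j. f i j * c i j)))
     \<le> card (sign_configs n) * exp (l^2 / 2 * (\<Sum>j<n. \<Sum>i<j. (c i j)^2))"
proof -
  let ?B = "PiE (PP n) (\<lambda>_. {-1::real, 1})"
  have "(\<Sum>f\<in>sign_configs n. exp (l * (\<Sum>j<n. \<Sum>i<j. f i j * c i j)))
      = (\<Sum>h\<in>?B. exp (l * (\<Sum>j<n. \<Sum>i<j. Fm n h i j * c i j)))"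
    unfolding sc_image by (rule sum.reindex[OF inj_Fm, unfolded comp_def])
  also have "\<dots> = (\<Sum>h\<in>?B. \<Prod>p\<in>PP n. exp (l * (h p * c (snd p) (fst p))))"
  proof (rule sum.cong[OF refl])
    fix h assume "h \<in> ?B"
    have "(\<Sum>j<n. \<Sum>i<j. Fm n h i j * c i j) = (\<Sum>p\<in>PP n. h p * c (snd p) (fst p))"
      unfolding sum_PP by (auto simp: Fm_def intro!: sum.cong)
    thus "exp (l * (\<Sum>j<n. \<Sum>i<j. Fm n h i j * c i j)) = (\<Prod>p\<in>PP n. exp (l * (h p * c (snd p) (fst p))))"
      by (simp add: sum_distrib_left exp_sum finite_PP)
  qed
  also have "\<dots> = (\<Prod>p\<in>PP n. \<Sum>y\<in>{-1::real,1}. exp (l * (y * c (snd p) (fst p))))"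
    by (rule prod_sum_PiE[symmetric]) (auto simp: finite_PP)
  also have "\<dots> = (\<Prod>p\<in>PP n. 2 * ((exp (l * c (snd p) (fst p)) + exp (- (l * c (snd p) (fst p)))) / 2))"
    by (intro prod.cong) auto
  also have "\<dots> \<le> (\<Prod>p\<in>PP n. 2 * exp ((l * c (snd p) (fst p))^2 / 2))"
  proof (intro prod_mono conjI)
    fix p assume "p \<in> PP n"
    show "0 \<le> 2 * ((exp (l * c (snd p) (fst p)) + exp (- (l * c (snd p) (fst p)))) / 2)"
      by (intro mult_nonneg_nonneg divide_nonneg_pos add_nonneg_nonneg) auto
    show "2 * ((exp (l * c (snd p) (fst p)) + exp (- (l * c (snd p) (fst p)))) / 2) \<le> 2 * exp ((l * c (snd p) (fst p))^2 / 2)"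
      using cosh_bound[of "l * c (snd p) (fst p)"] by linarith
  qed
  also have "\<dots> = 2 ^ card (PP n) * exp (\<Sum>p\<in>PP n. (l * c (snd p) (fst p))^2 / 2)"
    by (simp add: prod.distrib exp_sum finite_PP)
  also have "(\<Sum>p\<in>PP n. (l * c (snd p) (fst p))^2 / 2) = l^2 / 2 * (\<Sum>j<n. \<Sum>i<j. (c i j)^2)"
    unfolding sum_PP by (simp add: sum_distrib_left power_mult_distrib mult.commute)
  finally show ?thesis by (simp add: card_sc)
qed

lemma tail_bound:
  fixes c :: "nat \<Rightarrow> nat \<Rightarrow> real"
  assumes s2: "s2 > 0" and csum: "(\<Sum>j<n. \<Sum>i<j. (c i j)^2) \<le> s2" and tt: "tt \<ge> 0"
  shows "real (card {f\<in>sign_configs n. tt \<le> (\<Sum>j<n. \<Sum>i<j. f i j * c i j)})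
           \<le> card (sign_configs n) * exp (- (tt^2) / (2 * s2))"
proof -
  define X where "X = (\<lambda>f::nat\<Rightarrow>nat\<Rightarrow>real. \<Sum>j<n. \<Sum>i<j. f i j * c i j)"
  define l where "l = tt / s2"
  have l0: "l \<ge> 0" using s2 tt by (simp add: l_def)
  let ?A = "{f\<in>sign_configs n. tt \<le> X f}"
  have "real (card ?A) = (\<Sum>f\<in>?A. 1)" by simp
  also have "\<dots> \<le> (\<Sum>f\<in>?A. exp (l * (X f - tt)))"
  proof (rule sum_mono)
    fix f assume "f \<in> ?A"
    hence "l * (X f - tt) \<ge> 0" using l0 by simp
    thus "1 \<le> exp (l * (X f - tt))" by simp
  qed
  also have "\<dots> \<le> (\<Sum>f\<in>sign_configs n. exp (l * (X f - tt)))"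
    by (rule sum_mono2) (auto simp: finite_sc)
  also have "\<dots> = exp (- l * tt) * (\<Sum>f\<in>sign_configs n. exp (l * X f))"
    by (simp add: sum_distrib_left right_diff_distrib exp_diff exp_minus field_simps)
  also have "\<dots> \<le> exp (- l * tt) * (card (sign_configs n) * exp (l^2 / 2 * (\<Sum>j<n. \<Sum>i<j. (c i j)^2)))"
    unfolding X_def by (intro mult_left_mono mgf_bound) auto
  also have "\<dots> \<le> exp (- l * tt) * (card (sign_configs n) * exp (l^2 / 2 * s2))"
    using csum by (auto intro!: mult_left_mono)
  also have "\<dots> = card (sign_configs n) * exp (- l * tt + l^2 / 2 * s2)"
    by (simp add: mult_exp_exp)
  also have "- l * tt + l^2 / 2 * s2 = - (tt^2) / (2 * s2)"
    using s2 by (simp add: l_def field_simps power2_eq_square)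
  finally show ?thesis unfolding X_def .
qed

lemma bilinear_sym:
  fixes u v :: "nat \<Rightarrow> real"
  shows "(\<Sum>i<n. \<Sum>j<n. u i * sym_of f i j * v j) = (\<Sum>j<n. \<Sum>i<j. f i j * (u i * v j + u j * v i))"
proof -
  have "(\<Sum>i<n. \<Sum>j<n. u i * sym_of f i j * v j) =
        (\<Sum>j<n. \<Sum>i<j. u i * sym_of f i j * v j + u j * sym_of f j i * v i) + (\<Sum>i<n. u i * sym_of f i i * v i)"
    by (rule sum_square_split)
  also have "(\<Sum>i<n. u i * sym_of f i i * v i) = 0" by (simp add: sym_of_def)
  also have "(\<Sum>j<n. \<Sum>i<j. u i * sym_of f i j * v j + u j * sym_of f j i * v i) = (\<Sum>j<n. \<Sum>i<j. f i j * (u i * v j + u j * v i))"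
    by (intro sum.cong refl) (auto simp: sym_of_def algebra_simps)
  finally show ?thesis by simp
qed

lemma coef_bound:
  fixes u v :: "nat \<Rightarrow> real"
  shows "(\<Sum>j<n. \<Sum>i<j. (u i * v j + u j * v i)^2) \<le> 2 * ((\<Sum>i<n. (u i)^2) * (\<Sum>j<n. (v j)^2))"
proof -
  have "(\<Sum>j<n. \<Sum>i<j. (u i * v j + u j * v i)^2) \<le> (\<Sum>j<n. \<Sum>i<j. 2 * ((u i)^2 * (v j)^2 + (u j)^2 * (v i)^2))"
  proof (intro sum_mono)
    fix j i
    have "0 \<le> (u i * v j - u j * v i)^2" by simp
    thus "(u i * v j + u j * v i)^2 \<le> 2 * ((u i)^2 * (v j)^2 + (u j)^2 * (v i)^2)"
      by (simp add: power2_eq_square algebra_simps)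
  qed
  also have "\<dots> = 2 * (\<Sum>j<n. \<Sum>i<j. (u i)^2 * (v j)^2 + (u j)^2 * (v i)^2)"
    by (simp add: sum_distrib_left)
  also have "(\<Sum>j<n. \<Sum>i<j. (u i)^2 * (v j)^2 + (u j)^2 * (v i)^2) \<le> (\<Sum>i<n. \<Sum>j<n. (u i)^2 * (v j)^2)"
  proof -
    have "(\<Sum>i<n. \<Sum>j<n. (u i)^2 * (v j)^2) = (\<Sum>j<n. \<Sum>i<j. (u i)^2 * (v j)^2 + (u j)^2 * (v i)^2) + (\<Sum>i<n. (u i)^2 * (v i)^2)"
      by (rule sum_square_split)
    moreover have "(\<Sum>i<n. (u i)^2 * (v i)^2) \<ge> 0" by (intro sum_nonneg) auto
    ultimately show ?thesis by linarith
  qed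
  also have "(\<Sum>i<n. \<Sum>j<n. (u i)^2 * (v j)^2) = (\<Sum>i<n. (u i)^2) * (\<Sum>j<n. (v j)^2)"
    by (simp add: sum_product)
  finally show ?thesis by simp
qed

lemma geo_int_sum:
  fixes q :: real
  assumes q: "0 \<le> q" "q < 1"
  shows "(\<Sum>m\<in>{-int N..int N}. q ^ nat \<bar>m\<bar>) \<le> 1 + 2 * q / (1 - q)"
proof -
  have eq: "(\<Sum>m\<in>{-int N..int N}. q ^ nat \<bar>m\<bar>) = 1 + 2 * (\<Sum>k\<in>{1..N}. q ^ k)"
  proof (induction N)
    case 0 then show ?case by simp
  next
    case (Suc N)
    have set: "{-int (Suc N)..int (Suc N)} = insert (int (Suc N)) (insert (- int (Suc N)) {-int N..int N})"
      by auto
    have "(\<Sum>m\<in>{-int (Suc N)..int (Suc N)}. q ^ nat \<bar>m\<bar>) = q ^ Suc N + q ^ Suc N + (\<Sum>m\<in>{-int N..int N}. q ^ nat \<bar>m\<bar>)"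
    proof -
      have n1: "nat (int N + 1) = Suc N" "nat (1 + int N) = Suc N" by auto
      show ?thesis unfolding set by (subst sum.insert; simp add: n1)+
    qed
    then show ?case using Suc by simp
  qed
  have "(1 - q) * (\<Sum>k\<in>{1..N}. q ^ k) = q - q ^ Suc N"
  proof (induction N)
    case 0 then show ?case by simp
  next
    case (Suc N)
    have "(\<Sum>k\<in>{1..Suc N}. q ^ k) = (\<Sum>k\<in>{1..N}. q ^ k) + q ^ Suc N" by simp
    hence "(1 - q) * (\<Sum>k\<in>{1..Suc N}. q ^ k) = (1 - q) * (\<Sum>k\<in>{1..N}. q ^ k) + (1 - q) * q ^ Suc N"
      by (simp add: algebra_simps)
    also have "\<dots> = q - q ^ Suc N + (1 - q) * q ^ Suc N" using Suc.IH by simp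
    also have "\<dots> = q - q ^ Suc (Suc N)" by (simp add: algebra_simps)
    finally show ?case .
  qed
  hence "(1 - q) * (\<Sum>k\<in>{1..N}. q ^ k) \<le> q" using q by simp
  hence "(\<Sum>k\<in>{1..N}. q ^ k) \<le> q / (1 - q)" using q by (simp add: field_simps)
  thus ?thesis unfolding eq by simp
qed

definition Znet :: "nat \<Rightarrow> real \<Rightarrow> (nat \<Rightarrow> int) set" where
  "Znet n R = {z. (\<forall>i. n \<le> i \<longrightarrow> z i = 0) \<and> real_of_int (\<Sum>i<n. \<bar>z i\<bar>) \<le> R}"

lemma Znet_sub: "Znet n R \<subseteq> PiE_dflt {..<n} 0 (\<lambda>_. {-int (nat \<lfloor>R\<rfloor>)..int (nat \<lfloor>R\<rfloor>)})"
proof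
  fix z assume z: "z \<in> Znet n R"
  show "z \<in> PiE_dflt {..<n} 0 (\<lambda>_. {-int (nat \<lfloor>R\<rfloor>)..int (nat \<lfloor>R\<rfloor>)})"
    unfolding PiE_dflt_def
  proof (intro CollectI allI conjI impI)
    fix i assume i: "i \<in> {..<n}"
    have "\<bar>z i\<bar> \<le> (\<Sum>i<n. \<bar>z i\<bar>)"
      using i by (intro member_le_sum) auto
    hence "real_of_int \<bar>z i\<bar> \<le> real_of_int (\<Sum>i<n. \<bar>z i\<bar>)" by (simp only: of_int_le_iff)
    moreover have "real_of_int (\<Sum>i<n. \<bar>z i\<bar>) \<le> R" using z unfolding Znet_def by simp
    ultimately have "real_of_int \<bar>z i\<bar> \<le> R" by linarith
    hence zl: "\<bar>z i\<bar> \<le> \<lfloor>R\<rfloor>" by linarith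
    hence f0: "0 \<le> \<lfloor>R\<rfloor>" by linarith
    show "z i \<in> {-int (nat \<lfloor>R\<rfloor>)..int (nat \<lfloor>R\<rfloor>)}" using zl f0 by (auto simp: abs_le_iff)
  next
    fix i assume "i \<notin> {..<n}" thus "z i = 0" using z by (simp add: Znet_def)
  qed
qed

lemma card_Znet:
  fixes l :: real
  assumes l: "l > 0" and R: "R \<ge> 0"
  shows "real (card (Znet n R)) \<le> exp (l * R) * (1 + 2 * exp (-l) / (1 - exp (-l))) ^ n"
proof -
  define N where "N = nat \<lfloor>R\<rfloor>"
  define B where "B = (\<lambda>_::nat. {-int N..int N})"
  define E where "E = (\<lambda>h::nat\<Rightarrow>int. \<lambda>x. if x \<in> {..<n} then h x else 0)"
  define G where "G = (\<lambda>z::nat\<Rightarrow>int. \<Prod>i<n. exp (- l * \<bar>z i\<bar>))"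
  have fin: "finite (PiE_dflt {..<n} 0 B)" unfolding B_def by auto
  have sub: "Znet n R \<subseteq> PiE_dflt {..<n} 0 B" unfolding B_def N_def by (rule Znet_sub)
  have "real (card (Znet n R)) = (\<Sum>z\<in>Znet n R. 1)" by simp
  also have "\<dots> \<le> (\<Sum>z\<in>Znet n R. exp (l * R) * G z)"
  proof (rule sum_mono)
    fix z assume z: "z \<in> Znet n R"
    have "G z = exp (\<Sum>i<n. - l * \<bar>z i\<bar>)" unfolding G_def by (simp add: exp_sum)
    also have "(\<Sum>i<n. - l * \<bar>z i\<bar>) = - l * real_of_int (\<Sum>i<n. \<bar>z i\<bar>)"
      by (simp add: sum_distrib_left)
    finally have "exp (l * R) * G z = exp (l * R + - l * real_of_int (\<Sum>i<n. \<bar>z i\<bar>))"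
      by (simp add: mult_exp_exp)
    hence "exp (l * R) * G z = exp (l * (R - real_of_int (\<Sum>i<n. \<bar>z i\<bar>)))"
      by (simp add: algebra_simps)
    moreover have "l * (R - real_of_int (\<Sum>i<n. \<bar>z i\<bar>)) \<ge> 0" using z l by (simp add: Znet_def)
    ultimately show "1 \<le> exp (l * R) * G z" by simp
  qed
  also have "\<dots> \<le> (\<Sum>z\<in>PiE_dflt {..<n} 0 B. exp (l * R) * G z)"
    by (rule sum_mono2[OF fin sub]) (auto simp: G_def intro!: mult_nonneg_nonneg prod_nonneg)
  also have "\<dots> = (\<Sum>h\<in>PiE {..<n} B. exp (l * R) * G (E h))"
  proof -
    have inj: "inj_on E (PiE {..<n} B)"
    proof (rule inj_onI)
      fix x y assume x: "x \<in> PiE {..<n} B" and y: "y \<in> PiE {..<n} B" and e: "E x = E y"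
      show "x = y"
      proof (rule PiE_ext[OF x y])
        fix i assume "i \<in> {..<n}"
        thus "x i = y i" using fun_cong[OF e, of i] by (simp add: E_def)
      qed
    qed
    show ?thesis
      unfolding dflt_image_PiE[symmetric] E_def[symmetric] by (rule sum.reindex[OF inj, unfolded comp_def])
  qed
  also have "\<dots> = exp (l * R) * (\<Sum>h\<in>PiE {..<n} B. \<Prod>i<n. exp (- l * \<bar>h i\<bar>))"
    by (simp add: sum_distrib_left G_def E_def)
  also have "(\<Sum>h\<in>PiE {..<n} B. \<Prod>i<n. exp (- l * \<bar>h i\<bar>)) = (\<Prod>i<n. \<Sum>m\<in>B i. exp (- l * \<bar>m\<bar>))"
    by (rule prod_sum_PiE[symmetric]) (auto simp: B_def)
  also have "\<dots> = (\<Sum>m\<in>{-int N..int N}. exp (-l) ^ nat \<bar>m\<bar>) ^ n"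
  proof -
    have "\<And>m::int. exp (- l * \<bar>m\<bar>) = exp (-l) ^ nat \<bar>m\<bar>"
      by (simp add: exp_of_nat_mult[symmetric] mult.commute)
    thus ?thesis by (simp add: B_def)
  qed
  also have "\<dots> \<le> (1 + 2 * exp (-l) / (1 - exp (-l))) ^ n"
    by (intro power_mono geo_int_sum sum_nonneg) (use l in auto)
  finally show ?thesis by (simp add: mult_left_mono)
qed



definition nv :: "(nat \<Rightarrow> nat \<Rightarrow> real) \<Rightarrow> nat set \<Rightarrow> (nat \<Rightarrow> real) \<Rightarrow> real" where
  "nv W S y = sqrt (\<Sum>i\<in>S. (\<Sum>j\<in>S. W i j * y j)^2)"
definition nrm :: "nat set \<Rightarrow> (nat \<Rightarrow> real) \<Rightarrow> real" where
  "nrm S x = (\<Sum>j\<in>S. (x j)^2)"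
definition bil :: "(nat \<Rightarrow> nat \<Rightarrow> real) \<Rightarrow> nat set \<Rightarrow> (nat \<Rightarrow> real) \<Rightarrow> (nat \<Rightarrow> real) \<Rightarrow> real" where
  "bil W S x y = (\<Sum>i\<in>S. x i * (\<Sum>j\<in>S. W i j * y j))"

lemma op_norm_alt: "op_norm_sub W S = Sup {nv W S x | x. nrm S x \<le> 1}"
  by (simp add: op_norm_sub_def nv_def nrm_def)

lemma nrm_nonneg: "nrm S x \<ge> 0"
  by (simp add: nrm_def sum_nonneg)

lemma nv_bound:
  assumes W: "\<And>i j. \<bar>W i j\<bar> \<le> 1" and x: "nrm S x \<le> 1"
  shows "nv W S x \<le> real (card S)"
proof -
  have "(\<Sum>i\<in>S. (\<Sum>j\<in>S. W i j * x j)^2) \<le> (\<Sum>i\<in>S. real (card S))"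
  proof (rule sum_mono)
    fix i
    have "(\<Sum>j\<in>S. W i j * x j)^2 \<le> (\<Sum>j\<in>S. (W i j)^2) * (\<Sum>j\<in>S. (x j)^2)"
      by (rule Cauchy_Schwarz_ineq_sum)
    also have "\<dots> \<le> (\<Sum>j\<in>S. 1) * 1"
    proof (intro mult_mono sum_mono)
      fix j
      have "\<bar>W i j\<bar>^2 \<le> 1^2" by (rule power_mono) (use W[of i j] in auto)
      thus "(W i j)^2 \<le> 1" by simp
    qed (use x in \<open>auto simp: nrm_def intro: sum_nonneg\<close>)
    finally show "(\<Sum>j\<in>S. W i j * x j)^2 \<le> real (card S)" by simp
  qed
  also have "\<dots> = (real (card S))^2" by (simp add: power2_eq_square)
  finally have "sqrt (\<Sum>i\<in>S. (\<Sum>j\<in>S. W i j * x j)^2) \<le> sqrt ((real (card S))^2)"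
    by (rule real_sqrt_le_mono)
  thus ?thesis unfolding nv_def by simp
qed

lemma bdd_nv:
  assumes W: "\<And>i j. \<bar>W i j\<bar> \<le> 1"
  shows "bdd_above {nv W S x | x. nrm S x \<le> 1}"
  using nv_bound[OF W] by (auto intro!: bdd_aboveI)

lemma nv_le_op:
  assumes W: "\<And>i j. \<bar>W i j\<bar> \<le> 1" and x: "nrm S x \<le> 1"
  shows "nv W S x \<le> op_norm_sub W S"
  unfolding op_norm_alt by (rule cSup_upper) (use x bdd_nv[OF W] in auto)

lemma op_nonneg:
  assumes W: "\<And>i j. \<bar>W i j\<bar> \<le> 1"
  shows "0 \<le> op_norm_sub W S"
proof -
  have "nv W S (\<lambda>_. 0) \<le> op_norm_sub W S" by (rule nv_le_op[OF W]) (simp add: nrm_def)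
  thus ?thesis by (simp add: nv_def)
qed

lemma nv_scale: "nv W S (\<lambda>j. c * y j) = \<bar>c\<bar> * nv W S y"
proof -
  have "\<And>i. (\<Sum>j\<in>S. W i j * (c * y j)) = c * (\<Sum>j\<in>S. W i j * y j)"
    by (simp add: sum_distrib_left mult.left_commute)
  hence "(\<Sum>i\<in>S. (\<Sum>j\<in>S. W i j * (c * y j))^2) = (\<Sum>i\<in>S. c^2 * (\<Sum>j\<in>S. W i j * y j)^2)"
    by (simp add: power_mult_distrib)
  also have "\<dots> = c^2 * (\<Sum>i\<in>S. (\<Sum>j\<in>S. W i j * y j)^2)"
    by (rule sum_distrib_left[symmetric])
  finally show ?thesis by (simp add: nv_def real_sqrt_mult)
qed

lemma nv_le_op_gen:
  assumes W: "\<And>i j. \<bar>W i j\<bar> \<le> 1" and S: "finite S"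
  shows "nv W S y \<le> op_norm_sub W S * sqrt (nrm S y)"
proof (cases "nrm S y = 0")
  case True
  have "\<forall>j\<in>S. y j = 0"
    using True S by (simp add: nrm_def sum_nonneg_eq_0_iff)
  hence "nv W S y = 0" by (simp add: nv_def)
  thus ?thesis using True by simp
next
  case False
  hence pos: "nrm S y > 0" using nrm_nonneg[of S y] by simp
  define c where "c = 1 / sqrt (nrm S y)"
  have c0: "c > 0" using pos by (simp add: c_def)
  have "nrm S (\<lambda>j. c * y j) = c^2 * nrm S y"
    by (simp add: nrm_def power_mult_distrib sum_distrib_left)
  also have "\<dots> = 1" using pos by (simp add: c_def power_divide)
  finally have "nv W S (\<lambda>j. c * y j) \<le> op_norm_sub W S" by (intro nv_le_op[OF W]) simp
  hence "c * nv W S y \<le> op_norm_sub W S" using c0 by (simp add: nv_scale)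
  thus ?thesis using pos by (simp add: c_def field_simps)
qed

lemma bil_bound:
  "\<bar>bil W S x y\<bar> \<le> sqrt (nrm S x) * nv W S y"
proof -
  have "(bil W S x y)^2 \<le> nrm S x * (\<Sum>i\<in>S. (\<Sum>j\<in>S. W i j * y j)^2)"
    unfolding bil_def nrm_def by (rule Cauchy_Schwarz_ineq_sum)
  hence "sqrt ((bil W S x y)^2) \<le> sqrt (nrm S x * (\<Sum>i\<in>S. (\<Sum>j\<in>S. W i j * y j)^2))"
    by (rule real_sqrt_le_mono)
  thus ?thesis by (simp add: nv_def real_sqrt_mult)
qed

lemma bil_diff1: "bil W S (\<lambda>i. x i - u i) y = bil W S x y - bil W S u y"
  by (simp add: bil_def left_diff_distrib sum_subtractf)

lemma bil_diff2: "bil W S u (\<lambda>j. y j - v j) = bil W S u y - bil W S u v"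
  by (simp add: bil_def right_diff_distrib sum_subtractf)

lemma approx_op:
  assumes W: "\<And>i j. \<bar>W i j\<bar> \<le> 1" and S: "finite S" and t: "t \<ge> 0"
    and apx: "\<And>x. nrm S x \<le> 1 \<Longrightarrow> \<exists>u. nrm S u \<le> 1 \<and> nrm S (\<lambda>i. x i - u i) \<le> 1/16 \<and> P u"
    and bP: "\<And>u v. P u \<Longrightarrow> P v \<Longrightarrow> bil W S u v \<le> t"
  shows "op_norm_sub W S \<le> 2 * t"
proof -
  define M where "M = op_norm_sub W S"
  have M0: "M \<ge> 0" unfolding M_def by (rule op_nonneg[OF W])
  have key: "nv W S y \<le> t + M / 2" if y: "nrm S y \<le> 1" for y
  proof (cases "nv W S y = 0")
    case True thus ?thesis using t M0 by simp
  next
    case False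
    define N where "N = nv W S y"
    have N0: "N > 0"
    proof -
      have "N \<ge> 0" by (simp add: N_def nv_def sum_nonneg)
      thus ?thesis using False unfolding N_def by linarith
    qed
    define a where "a = (\<lambda>i. \<Sum>j\<in>S. W i j * y j)"
    have N2: "N^2 = (\<Sum>i\<in>S. (a i)^2)"
      unfolding N_def nv_def a_def by (simp add: sum_nonneg)
    define x where "x = (\<lambda>i. a i / N)"
    have nx: "nrm S x = 1"
    proof -
      have "nrm S x = (\<Sum>i\<in>S. (a i)^2) / N^2"
        unfolding nrm_def x_def by (simp add: power_divide sum_divide_distrib[symmetric])
      thus ?thesis unfolding N2[symmetric] using N0 by simp
    qed
    have bx: "bil W S x y = N"
    proof -
      have "bil W S x y = (\<Sum>i\<in>S. x i * a i)" by (simp add: bil_def a_def)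
      also have "\<dots> = (\<Sum>i\<in>S. (a i)^2) / N"
        unfolding x_def by (simp add: sum_divide_distrib power2_eq_square)
      finally have "bil W S x y = (\<Sum>i\<in>S. (a i)^2) / N" .
      thus ?thesis unfolding N2[symmetric] using N0 by (simp add: power2_eq_square)
    qed
    obtain u where u1: "nrm S u \<le> 1" and u2: "nrm S (\<lambda>i. x i - u i) \<le> 1/16" and Pu: "P u"
      using apx[of x] nx by auto
    obtain v where v2: "nrm S (\<lambda>i. y i - v i) \<le> 1/16" and Pv: "P v"
      using apx[OF y] by auto
    have dec: "bil W S x y = bil W S u v + bil W S (\<lambda>i. x i - u i) y + bil W S u (\<lambda>j. y j - v j)"
      by (simp add: bil_diff1 bil_diff2)
    have sq16: "sqrt (1/16::real) = 1/4" by (simp add: real_sqrt_divide)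
    have e1: "\<bar>bil W S (\<lambda>i. x i - u i) y\<bar> \<le> M / 4"
    proof -
      have "\<bar>bil W S (\<lambda>i. x i - u i) y\<bar> \<le> sqrt (nrm S (\<lambda>i. x i - u i)) * nv W S y" by (rule bil_bound)
      also have "\<dots> \<le> (1/4) * (M * 1)"
      proof (rule mult_mono)
        show "sqrt (nrm S (\<lambda>i. x i - u i)) \<le> 1/4" using u2 sq16 real_sqrt_le_mono by metis
        have "nv W S y \<le> M * sqrt (nrm S y)" unfolding M_def by (rule nv_le_op_gen[OF W S])
        also have "\<dots> \<le> M * 1" using y M0 by (intro mult_left_mono) auto
        finally show "nv W S y \<le> M * 1" .
      qed (auto simp: nv_def sum_nonneg)
      finally show ?thesis by simp
    qed
    have e2: "\<bar>bil W S u (\<lambda>j. y j - v j)\<bar> \<le> M / 4"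
    proof -
      have "\<bar>bil W S u (\<lambda>j. y j - v j)\<bar> \<le> sqrt (nrm S u) * nv W S (\<lambda>j. y j - v j)" by (rule bil_bound)
      also have "\<dots> \<le> 1 * (M * (1/4))"
      proof (rule mult_mono)
        show "sqrt (nrm S u) \<le> 1" using u1 by simp
        have "nv W S (\<lambda>j. y j - v j) \<le> M * sqrt (nrm S (\<lambda>j. y j - v j))" unfolding M_def by (rule nv_le_op_gen[OF W S])
        also have "\<dots> \<le> M * (1/4)" using v2 M0 sq16 by (intro mult_left_mono) (metis real_sqrt_le_mono, simp)
        finally show "nv W S (\<lambda>j. y j - v j) \<le> M * (1/4)" .
      qed (auto simp: nv_def sum_nonneg)
      finally show ?thesis by simp
    qed
    have "bil W S u v \<le> t" by (rule bP[OF Pu Pv])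
    hence "N \<le> t + M/4 + M/4" using dec bx e1 e2 by linarith
    thus ?thesis by (simp add: N_def)
  qed
  have "Sup {nv W S x |x. nrm S x \<le> 1} \<le> t + M / 2"
  proof (rule cSup_least)
    show "{nv W S x |x. nrm S x \<le> 1} \<noteq> {}" by (auto intro!: exI[of _ "\<lambda>_. 0"] simp: nrm_def)
  next
    fix z assume "z \<in> {nv W S x |x. nrm S x \<le> 1}"
    then obtain y where "z = nv W S y" "nrm S y \<le> 1" by auto
    thus "z \<le> t + M / 2" using key by simp
  qed
  hence "M \<le> t + M / 2" unfolding M_def op_norm_alt .
  thus ?thesis unfolding M_def by simp
qed



definition tr :: "real \<Rightarrow> int" where
  "tr r = (if r \<ge> 0 then \<lfloor>r\<rfloor> else \<lceil>r\<rceil>)"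

lemma tr_abs: "\<bar>real_of_int (tr r)\<bar> \<le> \<bar>r\<bar>"
  by (simp add: tr_def)

lemma tr_diff: "\<bar>r - real_of_int (tr r)\<bar> \<le> 1"
  using floor_correct[of r] ceiling_correct[of r] by (simp add: tr_def) linarith

lemma round_net:
  fixes x :: "nat \<Rightarrow> real"
  assumes S: "S \<subseteq> {..<n}" and cS: "real (card S) \<le> K" and K: "K > 0"
    and s: "s = 4 * sqrt K" and x: "nrm S x \<le> 1"
  defines "z \<equiv> (\<lambda>i. if i \<in> S then tr (s * x i) else 0)"
  shows "nrm S (\<lambda>i. real_of_int (z i) / s) \<le> 1"
    and "nrm S (\<lambda>i. x i - real_of_int (z i) / s) \<le> 1/16"
    and "z \<in> Znet n (4 * K)"
    and "(\<Sum>i<n. (real_of_int (z i))^2) \<le> s^2"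
    and "\<forall>i. i \<notin> S \<longrightarrow> z i = 0"
proof -
  have s0: "s > 0" using K s by simp
  have fS: "finite S" using S finite_subset by blast
  have zabs: "\<bar>real_of_int (z i)\<bar> \<le> s * \<bar>x i\<bar>" for i
    using tr_abs[of "s * x i"] s0 by (simp add: z_def abs_mult)
  have zsq: "(real_of_int (z i))^2 \<le> s^2 * (x i)^2" for i
  proof -
    have "\<bar>real_of_int (z i)\<bar>^2 \<le> (s * \<bar>x i\<bar>)^2" by (rule power_mono[OF zabs]) simp
    thus ?thesis by (simp add: power_mult_distrib)
  qed
  show "nrm S (\<lambda>i. real_of_int (z i) / s) \<le> 1"
  proof -
    have "nrm S (\<lambda>i. real_of_int (z i) / s) \<le> nrm S x"
      unfolding nrm_def
    proof (rule sum_mono)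
      fix i
      have "(real_of_int (z i) / s)^2 = (real_of_int (z i))^2 / s^2" by (simp add: power_divide)
      also have "\<dots> \<le> s^2 * (x i)^2 / s^2" by (rule divide_right_mono[OF zsq]) simp
      finally show "(real_of_int (z i) / s)^2 \<le> (x i)^2" using s0 by simp
    qed
    thus ?thesis using x by simp
  qed
  show "nrm S (\<lambda>i. x i - real_of_int (z i) / s) \<le> 1/16"
  proof -
    have "nrm S (\<lambda>i. x i - real_of_int (z i) / s) \<le> (\<Sum>i\<in>S. 1 / s^2)"
      unfolding nrm_def
    proof (rule sum_mono)
      fix i assume i: "i \<in> S"
      have "x i - real_of_int (z i) / s = (s * x i - real_of_int (tr (s * x i))) / s"
        using i s0 by (simp add: z_def field_simps)
      hence "\<bar>x i - real_of_int (z i) / s\<bar> \<le> 1 / s"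
        using tr_diff[of "s * x i"] s0 by (simp add: abs_div divide_right_mono)
      hence "\<bar>x i - real_of_int (z i) / s\<bar>^2 \<le> (1 / s)^2" by (rule power_mono) simp
      thus "(x i - real_of_int (z i) / s)^2 \<le> 1 / s^2" by (simp add: power_divide)
    qed
    also have "\<dots> = real (card S) / s^2" by simp
    also have "\<dots> \<le> K / (16 * K)"
      using cS K s by (simp add: power_mult_distrib divide_right_mono)
    also have "\<dots> = 1/16" using K by simp
    finally show ?thesis .
  qed
  show zS: "\<forall>i. i \<notin> S \<longrightarrow> z i = 0" by (simp add: z_def)
  have ext: "(\<Sum>i<n. g i) = (\<Sum>i\<in>S. g i)" if "\<And>i. i \<notin> S \<Longrightarrow> g i = 0" for g :: "nat \<Rightarrow> real"
    by (rule sum.mono_neutral_right) (use S that in auto)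
  show "(\<Sum>i<n. (real_of_int (z i))^2) \<le> s^2"
  proof -
    have "(\<Sum>i<n. (real_of_int (z i))^2) = (\<Sum>i\<in>S. (real_of_int (z i))^2)"
      by (rule ext) (simp add: z_def)
    also have "\<dots> \<le> (\<Sum>i\<in>S. s^2 * (x i)^2)" by (rule sum_mono[OF zsq])
    also have "\<dots> = s^2 * nrm S x" by (simp add: nrm_def sum_distrib_left)
    also have "\<dots> \<le> s^2 * 1" using x by (intro mult_left_mono) auto
    finally show ?thesis by simp
  qed
  show "z \<in> Znet n (4 * K)"
  proof -
    have "real_of_int (\<Sum>i<n. \<bar>z i\<bar>) = (\<Sum>i<n. \<bar>real_of_int (z i)\<bar>)" by simp
    also have "\<dots> = (\<Sum>i\<in>S. \<bar>real_of_int (z i)\<bar>)" by (rule ext) (simp add: z_def)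
    also have "\<dots> \<le> (\<Sum>i\<in>S. s * \<bar>x i\<bar>)" by (rule sum_mono[OF zabs])
    also have "\<dots> = s * (\<Sum>i\<in>S. 1 * \<bar>x i\<bar>)" by (simp add: sum_distrib_left)
    also have "\<dots> \<le> s * sqrt K"
    proof (rule mult_left_mono)
      have "(\<Sum>i\<in>S. 1 * \<bar>x i\<bar>)^2 \<le> (\<Sum>i\<in>S. 1^2) * (\<Sum>i\<in>S. \<bar>x i\<bar>^2)"
        by (rule Cauchy_Schwarz_ineq_sum)
      also have "\<dots> = real (card S) * nrm S x" by (simp add: nrm_def)
      also have "\<dots> \<le> K * 1" using cS x by (intro mult_mono) (auto simp: nrm_nonneg)
      finally have "(\<Sum>i\<in>S. 1 * \<bar>x i\<bar>)^2 \<le> K" by simp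
      hence "sqrt ((\<Sum>i\<in>S. 1 * \<bar>x i\<bar>)^2) \<le> sqrt K" by (rule real_sqrt_le_mono)
      moreover have "(\<Sum>i\<in>S. 1 * \<bar>x i\<bar>) \<ge> 0" by (simp add: sum_nonneg)
      ultimately show "(\<Sum>i\<in>S. 1 * \<bar>x i\<bar>) \<le> sqrt K" by simp
    qed (use s0 in simp)
    also have "\<dots> = 4 * K" using K s by (simp add: mult.assoc)
    finally show ?thesis using zS S unfolding Znet_def by auto
  qed
qed



lemma finite_Znet: "finite (Znet n R)"
  by (rule finite_subset[OF Znet_sub]) auto

lemma sym_abs:
  assumes f: "f \<in> sign_configs n"
  shows "\<bar>sym_of f i j\<bar> \<le> 1"
proof -
  have "\<bar>f a b\<bar> \<le> 1" for a b
  proof (cases "a < b \<and> b < n")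
    case True
    then have "f a b \<in> {-1,1}" using f by (simp add: sign_configs_def)
    thus ?thesis by auto
  next
    case False
    then have "f a b = 0" using f by (simp add: sign_configs_def)
    thus ?thesis by simp
  qed
  thus ?thesis by (simp add: sym_of_def)
qed

lemma alpha_choice:
  fixes \<beta> :: real
  assumes b: "\<beta> > 0"
  defines "r \<equiv> min (1/2) (\<beta>^2/416)"
  shows "r^2 > 0" "r^2 \<le> 1/4" "9 * r^2 * ln (1 / r^2) + 8 * r^2 \<le> \<beta>^2 / 16"
proof -
  have r0: "r > 0" using b by (simp add: r_def)
  have r1: "r \<le> 1/2" by (simp add: r_def)
  have r2: "r \<le> \<beta>^2/416" by (simp add: r_def)
  show "r^2 > 0" using r0 by simp
  have "r^2 \<le> (1/2)^2" by (rule power_mono[OF r1]) (use r0 in simp)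
  also have "(1/2::real)^2 = 1/4" by (simp add: power2_eq_square)
  finally show "r^2 \<le> 1/4" .
  have "ln (1 / r^2) = 2 * ln (1 / r)" using r0 by (simp add: ln_div ln_realpow)
  also have "\<dots> \<le> 2 * (1 / r - 1)" using r0 ln_le_minus_one[of "1/r"] by simp
  also have "\<dots> \<le> 2 / r" using r0 by (simp add: field_simps)
  finally have L: "ln (1 / r^2) \<le> 2 / r" .
  have "r^2 * ln (1 / r^2) \<le> r^2 * (2 / r)" by (rule mult_left_mono[OF L]) simp
  also have "\<dots> = 2 * r" using r0 by (simp add: power2_eq_square)
  finally have A: "r^2 * ln (1 / r^2) \<le> 2 * r" .
  have B: "r^2 \<le> r" using r0 r1 by (simp add: power2_eq_square mult_le_cancel_right1 )
  have "9 * r^2 * ln (1 / r^2) + 8 * r^2 \<le> 9 * (2 * r) + 8 * r" using A B by linarith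
  also have "\<dots> \<le> \<beta>^2 / 16" using r2 by simp
  finally show "9 * r^2 * ln (1 / r^2) + 8 * r^2 \<le> \<beta>^2 / 16" .
qed

lemma main_n:
  fixes \<beta> \<alpha> :: real and n :: nat
  assumes b: "\<beta> > 0" and a0: "\<alpha> > 0" and a1: "\<alpha> \<le> 1/4"
    and ab: "9 * \<alpha> * ln (1 / \<alpha>) + 8 * \<alpha> \<le> \<beta>^2 / 16" and n: "n > 0"
  shows "measure_pmf.prob (rademacher_sym_pmf n)
        {W. \<forall>S \<subseteq> {..<n}. real (card S) \<le> \<alpha> * real n \<longrightarrow> op_norm_sub W S \<le> \<beta> * sqrt (real n)}
      \<ge> 1 - 4 * exp (- (\<alpha> * ln (1 / \<alpha>) * real n))"
proof -
  define G where "G = {W. \<forall>S \<subseteq> {..<n}. real (card S) \<le> \<alpha> * real n \<longrightarrow> op_norm_sub W S \<le> \<beta> * sqrt (real n)}"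
  define SC where "SC = sign_configs n"
  define K where "K = \<alpha> * real n"
  define s where "s = 4 * sqrt K"
  define t where "t = \<beta> * sqrt (real n) / 2"
  define L where "L = ln (1 / \<alpha>)"
  define Z2 where "Z2 = {z \<in> Znet n (4 * K). (\<Sum>i<n. (real_of_int (z i))^2) \<le> s^2}"
  define Y where "Y = (\<lambda>z z' f. \<Sum>i<n. \<Sum>j<n. real_of_int (z i) * sym_of f i j * real_of_int (z' j))"
  define A where "A = (\<lambda>p. {f \<in> SC. s^2 * t \<le> Y (fst p) (snd p) f})"
  define Bad where "Bad = (\<Union>p\<in>Z2 \<times> Z2. A p)"
  have K0: "K > 0" using a0 n by (simp add: K_def)
  have s0: "s > 0" using K0 by (simp add: s_def)
  have t0: "t \<ge> 0" using b by (simp add: t_def)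
  have finSC: "finite SC" and neSC: "SC \<noteq> {}" by (simp_all add: SC_def finite_sc sc_nonempty)
  have finZ2: "finite Z2" unfolding Z2_def by (rule finite_subset[OF _ finite_Znet[of n "4*K"]]) auto
  have BadSC: "Bad \<subseteq> SC" by (auto simp: Bad_def A_def)
  have good: "sym_of f \<in> G" if f: "f \<in> SC" and nb: "f \<notin> Bad" for f
  proof -
    have Y_lt: "Y z z' f < s^2 * t" if "z \<in> Z2" "z' \<in> Z2" for z z'
      using nb f that by (force simp: Bad_def A_def)
    show ?thesis unfolding G_def
    proof (intro CollectI allI impI)
      fix S assume S: "S \<subseteq> {..<n}" and cS: "real (card S) \<le> \<alpha> * real n"
      have fS: "finite S" using S finite_subset by blast
      define P where "P = (\<lambda>u. \<exists>z\<in>Z2. (\<forall>i. i \<notin> S \<longrightarrow> z i = 0) \<and> u = (\<lambda>i. real_of_int (z i) / s))"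
      have "op_norm_sub (sym_of f) S \<le> 2 * t"
      proof (rule approx_op[where P = P])
        show "\<And>i j. \<bar>sym_of f i j\<bar> \<le> 1" using f by (simp add: SC_def sym_abs)
        show "finite S" by (rule fS)
        show "t \<ge> 0" by (rule t0)
      next
        fix x assume x: "nrm S x \<le> 1"
        define z where "z = (\<lambda>i. if i \<in> S then tr (s * x i) else 0)"
        note R = round_net[OF S cS[folded K_def] K0 s_def x]
        have "P (\<lambda>i. real_of_int (z i) / s)"
          unfolding P_def Z2_def using R(3,4,5) by (auto simp: z_def)
        thus "\<exists>u. nrm S u \<le> 1 \<and> nrm S (\<lambda>i. x i - u i) \<le> 1/16 \<and> P u"
          using R(1,2) unfolding z_def by blast
      next
        fix u v assume Pu: "P u" and Pv: "P v"
        then obtain z z' where z: "z \<in> Z2" "\<forall>i. i \<notin> S \<longrightarrow> z i = 0" "u = (\<lambda>i. real_of_int (z i) / s)"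
          and z': "z' \<in> Z2" "\<forall>i. i \<notin> S \<longrightarrow> z' i = 0" "v = (\<lambda>i. real_of_int (z' i) / s)"
          unfolding P_def by blast
        have ext: "(\<Sum>i<n. g i) = (\<Sum>i\<in>S. g i)" if "\<And>i. i \<notin> S \<Longrightarrow> g i = 0" for g :: "nat \<Rightarrow> real"
          by (rule sum.mono_neutral_right) (use S that in auto)
        have "Y z z' f = (\<Sum>i\<in>S. \<Sum>j\<in>S. real_of_int (z i) * sym_of f i j * real_of_int (z' j))"
        proof -
          have "Y z z' f = (\<Sum>i\<in>S. \<Sum>j<n. real_of_int (z i) * sym_of f i j * real_of_int (z' j))"
            unfolding Y_def by (rule ext) (use z in simp)
          also have "\<dots> = (\<Sum>i\<in>S. \<Sum>j\<in>S. real_of_int (z i) * sym_of f i j * real_of_int (z' j))"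
            by (intro sum.cong refl ext) (use z' in simp)
          finally show ?thesis .
        qed
        also have "\<dots> = s^2 * bil (sym_of f) S u v"
          unfolding bil_def z(3) z'(3) using s0
          by (simp add: sum_distrib_left power2_eq_square field_simps)
        finally have "s^2 * bil (sym_of f) S u v < s^2 * t" using Y_lt[OF z(1) z'(1)] by simp
        thus "bil (sym_of f) S u v \<le> t" using s0 by simp
      qed
      thus "op_norm_sub (sym_of f) S \<le> \<beta> * sqrt (real n)" by (simp add: t_def)
    qed
  qed
  have tailA: "real (card (A p)) \<le> card SC * exp (- (t^2 / 4))" if p: "p \<in> Z2 \<times> Z2" for p
  proof -
    obtain z z' where pz: "p = (z, z')" and z: "z \<in> Z2" and z': "z' \<in> Z2" using p by auto
    define u where "u = (\<lambda>i. real_of_int (z i))"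
    define v where "v = (\<lambda>i. real_of_int (z' i))"
    define c where "c = (\<lambda>i j. u i * v j + u j * v i)"
    have nu: "(\<Sum>i<n. (u i)^2) \<le> s^2" using z by (simp add: Z2_def u_def)
    have nv': "(\<Sum>i<n. (v i)^2) \<le> s^2" using z' by (simp add: Z2_def v_def)
    have csum: "(\<Sum>j<n. \<Sum>i<j. (c i j)^2) \<le> 2 * s^2 * s^2"
    proof -
      have "(\<Sum>j<n. \<Sum>i<j. (c i j)^2) \<le> 2 * ((\<Sum>i<n. (u i)^2) * (\<Sum>j<n. (v j)^2))"
        unfolding c_def by (rule coef_bound)
      also have "\<dots> \<le> 2 * (s^2 * s^2)"
        using nu nv' by (intro mult_left_mono mult_mono) (auto intro: sum_nonneg)
      finally show ?thesis by (simp only: mult.assoc)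
    qed
    have Aeq: "A p = {f \<in> sign_configs n. s^2 * t \<le> (\<Sum>j<n. \<Sum>i<j. f i j * c i j)}"
      unfolding A_def pz SC_def Y_def using bilinear_sym[of u _ v n]
      by (simp add: u_def v_def c_def)
    have "real (card (A p)) \<le> card (sign_configs n) * exp (- ((s^2 * t)^2) / (2 * (2 * s^2 * s^2)))"
      unfolding Aeq by (rule tail_bound) (use s0 csum t0 in auto)
    also have "- ((s^2 * t)^2) / (2 * (2 * s^2 * s^2)) = - (t^2 / 4)"
      using s0 by (simp add: power2_eq_square field_simps)
    finally show ?thesis by (simp add: SC_def)
  qed
  have cardBad: "real (card Bad) \<le> (real (card Z2))^2 * card SC * exp (- (t^2 / 4))"
  proof -
    have "card Bad \<le> (\<Sum>p\<in>Z2 \<times> Z2. card (A p))"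
      unfolding Bad_def by (rule card_UN_le) (use finZ2 in simp)
    hence "real (card Bad) \<le> (\<Sum>p\<in>Z2 \<times> Z2. real (card (A p)))"
      by (metis of_nat_le_iff of_nat_sum)
    also have "\<dots> \<le> (\<Sum>p\<in>Z2 \<times> Z2. card SC * exp (- (t^2 / 4)))"
      by (rule sum_mono[OF tailA])
    also have "\<dots> = (real (card Z2))^2 * card SC * exp (- (t^2 / 4))"
      by (simp add: card_cartesian_product power2_eq_square)
    finally show ?thesis .
  qed
  have cardZ2: "real (card Z2) \<le> exp (4 * \<alpha> * L * n + 4 * \<alpha> * n)"
  proof -
    have L0: "L > 0" using a0 a1 by (simp add: L_def)
    have eL: "exp (- L) = \<alpha>" using a0 by (simp add: L_def ln_div exp_minus)
    have "card Z2 \<le> card (Znet n (4 * K))" unfolding Z2_def by (rule card_mono[OF finite_Znet]) auto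
    hence "real (card Z2) \<le> card (Znet n (4 * K))" by simp
    also have "\<dots> \<le> exp (L * (4 * K)) * (1 + 2 * exp (-L) / (1 - exp (-L))) ^ n"
      by (rule card_Znet) (use L0 K0 in auto)
    also have "\<dots> \<le> exp (L * (4 * K)) * (exp (4 * \<alpha>)) ^ n"
    proof (intro mult_left_mono power_mono)
      have "2 * \<alpha> / (1 - \<alpha>) \<le> 4 * \<alpha>" using a0 a1 by (simp add: field_simps)
      hence "1 + 2 * \<alpha> / (1 - \<alpha>) \<le> 1 + 4 * \<alpha>" by simp
      also have "\<dots> \<le> exp (4 * \<alpha>)" by (rule exp_ge_add_one_self)
      finally show "1 + 2 * exp (-L) / (1 - exp (-L)) \<le> exp (4 * \<alpha>)" using eL by simp
      show "0 \<le> 1 + 2 * exp (-L) / (1 - exp (-L))" using eL a0 a1 by simp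
    qed simp
    also have "\<dots> = exp (4 * \<alpha> * L * n + 4 * \<alpha> * n)"
      by (simp add: exp_of_nat_mult[symmetric] mult_exp_exp K_def algebra_simps)
    finally show ?thesis .
  qed
  have P1: "measure_pmf.prob (rademacher_sym_pmf n) G = card (SC \<inter> sym_of -` G) / card SC"
    unfolding rademacher_sym_pmf_def SC_def by (simp add: measure_pmf_of_set finite_sc sc_nonempty)
  have P2: "card (SC - Bad) \<le> card (SC \<inter> sym_of -` G)"
    by (rule card_mono) (use finSC good in auto)
  have P3: "real (card (SC - Bad)) = real (card SC) - real (card Bad)"
    using BadSC finSC by (simp add: card_Diff_subset finite_subset of_nat_diff card_mono)
  have "(real (card SC) - real (card Bad)) / card SC \<le> real (card (SC \<inter> sym_of -` G)) / card SC"
    unfolding P3[symmetric] by (rule divide_right_mono) (use P2 in auto)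
  hence "measure_pmf.prob (rademacher_sym_pmf n) G \<ge> (real (card SC) - real (card Bad)) / card SC"
    unfolding P1 .
  moreover have "(real (card SC) - card Bad) / card SC = 1 - card Bad / card SC"
    using neSC finSC by (simp add: field_simps)
  moreover have "card Bad / card SC \<le> (real (card Z2))^2 * exp (- (t^2 / 4))"
  proof -
    have cpos: "real (card SC) > 0" using neSC finSC by (simp add: card_gt_0_iff)
    show ?thesis using cardBad cpos by (simp add: pos_divide_le_eq mult_ac)
  qed
  moreover have "(real (card Z2))^2 * exp (- (t^2 / 4)) \<le> exp (4 * \<alpha> * L * n + 4 * \<alpha> * n)^2 * exp (- (t^2 / 4))"
    using cardZ2 by (intro mult_right_mono power_mono) auto
  moreover have "exp (4 * \<alpha> * L * n + 4 * \<alpha> * n)^2 * exp (- (t^2 / 4)) = exp (n * (8 * \<alpha> * L + 8 * \<alpha> - \<beta>^2 / 16))"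
  proof -
    have "t^2 = \<beta>^2 * n / 4" by (simp add: t_def power_divide power_mult_distrib)
    thus ?thesis by (simp add: power2_eq_square mult_exp_exp algebra_simps)
  qed
  moreover have "exp (n * (8 * \<alpha> * L + 8 * \<alpha> - \<beta>^2 / 16)) \<le> 4 * exp (- (\<alpha> * L * n))"
  proof -
    have "n * (8 * \<alpha> * L + 8 * \<alpha> - \<beta>^2 / 16) \<le> n * (- (\<alpha> * L))"
      using ab by (intro mult_left_mono) (auto simp: L_def)
    hence "n * (8 * \<alpha> * L + 8 * \<alpha> - \<beta>^2 / 16) \<le> - (\<alpha> * L * n)" by (simp add: mult_ac)
    hence "exp (n * (8 * \<alpha> * L + 8 * \<alpha> - \<beta>^2 / 16)) \<le> exp (- (\<alpha> * L * n))"
      by (subst exp_le_cancel_iff)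
    moreover have "exp (- (\<alpha> * L * n)) > 0" by simp
    ultimately show ?thesis by linarith
  qed
  ultimately show ?thesis unfolding G_def L_def by linarith
qed


theorem lemma2:
  fixes \<beta> :: real
  assumes "\<beta> > 0"
  shows "\<exists>\<alpha>>0. \<alpha> < 1 \<and>
    (\<forall>n::nat. measure_pmf.prob (rademacher_sym_pmf n)
        {W. \<forall>S \<subseteq> {..<n}. real (card S) \<le> \<alpha> * real n \<longrightarrow> op_norm_sub W S \<le> \<beta> * sqrt (real n)}
      \<ge> 1 - 4 * exp (- (\<alpha> * ln (1 / \<alpha>) * real n)))"
proof -
  define r where "r = min (1/2) (\<beta>^2/416)"
  note ac = alpha_choice[OF assms, folded r_def]
  show ?thesis
  proof (intro exI[of _ "r^2"] conjI allI)
    show "r^2 > 0" by (rule ac(1))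
    show "r^2 < 1" using ac(2) by simp
  next
    fix n :: nat
    show "measure_pmf.prob (rademacher_sym_pmf n)
        {W. \<forall>S \<subseteq> {..<n}. real (card S) \<le> r^2 * real n \<longrightarrow> op_norm_sub W S \<le> \<beta> * sqrt (real n)}
      \<ge> 1 - 4 * exp (- (r^2 * ln (1 / r^2) * real n))"
    proof (cases "n = 0")
      case True
      have "0 \<le> measure_pmf.prob (rademacher_sym_pmf n)
        {W. \<forall>S \<subseteq> {..<n}. real (card S) \<le> r^2 * real n \<longrightarrow> op_norm_sub W S \<le> \<beta> * sqrt (real n)}"
        by (rule measure_nonneg)
      moreover have "exp (- (r^2 * ln (1 / r^2) * real n)) = 1" using True by simp
      ultimately show ?thesis by linarith
    next
      case False
      thus ?thesis by (intro main_n[OF assms ac(1) ac(2)]) (use ac(3) in auto)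
    qed
  qed
qed

end
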